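(* Let $(X,d)$ be a compact metric space, $f_{1,\infty}=(f_n)_{n=1}^\infty$ a sequence of continuous maps $f_n:X\to X$, and $(p_k)_{k=1}^\infty$ a sequence of positive integers. Let $(A_i)_{i=0}^\infty$ and $(B_i)_{i=0}^\infty$ be decreasing sequences of compact subsets of $X$ with $\bigcap_{i=0}^\infty A_i=\{a\}$ and $\bigcap_{i=0}^\infty B_i=\{b\}$, where $a\neq b$. Suppose that for every choice $c=(C_k)_k$ with $C_k\in\{A_k,B_k\}$ for each $k$, there exists $x_c\in X$ such that $f_1^{p_k}(x_c)\in C_k$ for all $k\ge 1$. Then $f_{1,\infty}$ is uniformly distributively chaotic in the sequence $(p_k)$.
   Context: For $n\in\mathbb{N}$, $f_1^n=f_n\circ\cdots\circ f_1$. For $x,y\in X$ and $t>0$ let $\Phi(f_{1,\infty},x,y,t,p_k)=\liminf_{n\to\infty}\frac1n\#\{1\le i\le n: d(f_1^{p_i}(x),f_1^{p_i}(y))<t\}$ and $\Phi^*(f_{1,\infty},x,y,t,p_k)=\limsup_{n\to\infty}\frac1n\#\{1\le i\le n: d(f_1^{p_i}(x),f_1^{p_i}(y))<t\}$. The system is uniformly distributively chaotic in the sequence $(p_k)$ if there exist an uncountable $S\subseteq X$ and $\varepsilon>0$ such that for all distinct $x,y\in S$: $\Phi(f_{1,\infty},x,y,\varepsilon,p_k)=0$ and $\Phi^*(f_{1,\infty},x,y,t,p_k)=1$ for all $t>0$. *)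

theory Defs
  imports "HOL-Analysis.Analysis"
begin

text \<open>Composition f_1^n = f_n o ... o f_1 (f_1^0 = id); maps are indexed from 1.\<close>
primrec comp_seq :: "(nat \<Rightarrow> 'a \<Rightarrow> 'a) \<Rightarrow> nat \<Rightarrow> 'a \<Rightarrow> 'a" where
  "comp_seq f 0 = id"
| "comp_seq f (Suc n) = f (Suc n) \<circ> comp_seq f n"

definition freq :: "(nat \<Rightarrow> 'a::metric_space \<Rightarrow> 'a) \<Rightarrow> 'a \<Rightarrow> 'a \<Rightarrow> real \<Rightarrow> (nat \<Rightarrow> nat) \<Rightarrow> nat \<Rightarrow> real" where
  "freq f x y t p n =
     real (card {i \<in> {1..n}. dist (comp_seq f (p i) x) (comp_seq f (p i) y) < t}) / real n"

definition Phi_lower :: "(nat \<Rightarrow> 'a::metric_space \<Rightarrow> 'a) \<Rightarrow> 'a \<Rightarrow> 'a \<Rightarrow> real \<Rightarrow> (nat \<Rightarrow> nat) \<Rightarrow> ereal" where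
  "Phi_lower f x y t p = liminf (\<lambda>n. ereal (freq f x y t p n))"

definition Phi_upper :: "(nat \<Rightarrow> 'a::metric_space \<Rightarrow> 'a) \<Rightarrow> 'a \<Rightarrow> 'a \<Rightarrow> real \<Rightarrow> (nat \<Rightarrow> nat) \<Rightarrow> ereal" where
  "Phi_upper f x y t p = limsup (\<lambda>n. ereal (freq f x y t p n))"

definition unif_distr_chaotic :: "'a::metric_space set \<Rightarrow> (nat \<Rightarrow> 'a \<Rightarrow> 'a) \<Rightarrow> (nat \<Rightarrow> nat) \<Rightarrow> bool" where
  "unif_distr_chaotic X f p \<longleftrightarrow>
     (\<exists>S \<subseteq> X. uncountable S \<and> (\<exists>\<epsilon>>0. \<forall>x\<in>S. \<forall>y\<in>S. x \<noteq> y \<longrightarrow>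
        Phi_lower f x y \<epsilon> p = 0 \<and> (\<forall>t>0. Phi_upper f x y t p = 1)))"

end

theory Submission
  imports Defs
begin


lemma shrink:
  fixes A :: "nat \<Rightarrow> 'a::metric_space set"
  assumes cA: "\<And>i. compact (A i)" and dA: "\<And>i. A (Suc i) \<subseteq> A i"
    and iA: "(\<Inter>i. A i) = {a}" and r: "r > 0"
  shows "\<exists>N. \<forall>k\<ge>N. A k \<subseteq> ball a r"
proof (rule ccontr)
  assume H: "\<not> ?thesis"
  have dec: "A m \<subseteq> A n" if "n \<le> m" for n m
    using dA that by (metis decseq_SucI decseqD)
  have ne: "A N - ball a r \<noteq> {}" for N
  proof -
    from H obtain k where "k \<ge> N" "\<not> A k \<subseteq> ball a r" by blast
    then show ?thesis using dec[of N k] by blast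
  qed
  have "A 0 \<inter> \<Inter>(range (\<lambda>N. A N - ball a r)) \<noteq> {}"
  proof (rule compact_imp_fip[OF cA])
    show "closed T" if T: "T \<in> range (\<lambda>N. A N - ball a r)" for T
    proof -
      obtain N where "T = A N - ball a r" using T by blast
      then show ?thesis using closed_Diff[OF compact_imp_closed[OF cA] open_ball] by simp
    qed
    show "A 0 \<inter> \<Inter>F' \<noteq> {}" if F': "finite F'" "F' \<subseteq> range (\<lambda>N. A N - ball a r)" for F'
    proof -
      obtain I where I: "finite I" "F' = (\<lambda>N. A N - ball a r) ` I"
        using F' by (meson finite_subset_image)
      define M where "M = Max (insert 0 I)"
      have le: "N \<le> M" if "N \<in> insert 0 I" for N
        unfolding M_def using I(1) that by (intro Max_ge) auto
      have "A M - ball a r \<subseteq> A 0 \<inter> \<Inter>F'"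
        using I(2) dec le by blast
      then show ?thesis using ne[of M] by blast
    qed
  qed
  then obtain z where "z \<in> A 0" "\<And>N. z \<in> A N" "z \<notin> ball a r" by blast
  then have "z \<in> (\<Inter>i. A i)" by blast
  then have "z = a" using iA by blast
  then show False using \<open>z \<notin> ball a r\<close> r by simp
qed

lemma liminf_zero:
  fixes g :: "nat \<Rightarrow> real"
  assumes "\<And>n. g n \<ge> 0" and fr: "\<And>N e. e > 0 \<Longrightarrow> \<exists>n\<ge>N. g n < e"
  shows "liminf (\<lambda>n. ereal (g n)) = 0"
proof (rule antisym)
  show "0 \<le> liminf (\<lambda>n. ereal (g n))"
    by (rule Liminf_bounded) (use assms(1) in auto)
  show "liminf (\<lambda>n. ereal (g n)) \<le> 0"
  proof (rule ccontr)
    assume "\<not> ?thesis"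
    then have "0 < liminf (\<lambda>n. ereal (g n))" by simp
    then obtain z where z: "0 < ereal z" "ereal z < liminf (\<lambda>n. ereal (g n))"
      using ereal_dense2 by blast
    then have "eventually (\<lambda>n. ereal (g n) > ereal z) sequentially"
      using less_LiminfD by blast
    then obtain N where "\<And>n. n \<ge> N \<Longrightarrow> g n > z"
      by (auto simp: eventually_sequentially)
    moreover obtain n where "n \<ge> N" "g n < z" using fr[of z N] z by auto
    ultimately show False by force
  qed
qed

lemma limsup_one:
  fixes g :: "nat \<Rightarrow> real"
  assumes "\<And>n. g n \<le> 1" and fr: "\<And>N e. e > 0 \<Longrightarrow> \<exists>n\<ge>N. g n > 1 - e"
  shows "limsup (\<lambda>n. ereal (g n)) = 1"
proof (rule antisym)
  show "limsup (\<lambda>n. ereal (g n)) \<le> 1"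
    by (rule Limsup_bounded) (use assms(1) in auto)
  show "1 \<le> limsup (\<lambda>n. ereal (g n))"
  proof (rule ccontr)
    assume "\<not> ?thesis"
    then have "limsup (\<lambda>n. ereal (g n)) < 1" by simp
    then obtain z where z: "ereal z < 1" "limsup (\<lambda>n. ereal (g n)) < ereal z"
      using ereal_dense2 by blast
    then have "eventually (\<lambda>n. ereal (g n) < ereal z) sequentially"
      using Limsup_lessD by blast
    then obtain N where "\<And>n. n \<ge> N \<Longrightarrow> g n < z"
      by (auto simp: eventually_sequentially)
    moreover obtain n where "n \<ge> N" "g n > 1 - (1 - z)" using fr[of "1 - z" N] z by auto
    ultimately show False by force
  qed
qed

lemma count_block:
  assumes "\<And>k. fact j \<le> k \<Longrightarrow> k < fact (Suc j) \<Longrightarrow> \<not> P k"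
  shows "real (card {i \<in> {1..fact (Suc j)::nat}. P i}) / real (fact (Suc j)) \<le> 1 / (real j + 1)"
proof -
  have sub: "{i \<in> {1..fact (Suc j)::nat}. P i} \<subseteq> {1..<fact j} \<union> {fact (Suc j)}"
  proof
    fix x assume x: "x \<in> {i \<in> {1..fact (Suc j)::nat}. P i}"
    show "x \<in> {1..<fact j} \<union> {fact (Suc j)}"
    proof (cases "x < fact j")
      case True then show ?thesis using x by auto
    next
      case False
      have "P x" "x \<le> fact (Suc j)" using x by auto
      then have "\<not> x < fact (Suc j)" using assms[of x] False by (metis not_less)
      then have "x = fact (Suc j)" using \<open>x \<le> fact (Suc j)\<close> by linarith
      then show ?thesis by simp
    qed
  qed
  have "card {i \<in> {1..fact (Suc j)::nat}. P i} \<le> card ({1..<fact j} \<union> {fact (Suc j)::nat})"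
    by (rule card_mono[OF _ sub]) auto
  also have "\<dots> \<le> card {1..<fact j::nat} + card {fact (Suc j)::nat}"
    by (rule card_Un_le)
  also have "\<dots> = fact j"
    using fact_ge_1[of j, where 'a=nat] by simp
  finally have c: "real (card {i \<in> {1..fact (Suc j)::nat}. P i}) \<le> real (fact j)"
    by linarith
  have fs: "real (fact (Suc j) :: nat) = (real j + 1) * real (fact j :: nat)"
    by (simp add: fact_Suc algebra_simps)
  have pos: "real (fact j :: nat) > 0" by simp
  have "real (card {i \<in> {1..fact (Suc j)::nat}. P i}) / ((real j + 1) * real (fact j :: nat))
     \<le> real (fact j :: nat) / ((real j + 1) * real (fact j :: nat))"
    using c pos by (intro divide_right_mono) auto
  also have "\<dots> = 1 / (real j + 1)" using pos by simp
  finally show ?thesis unfolding fs .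
qed

lemma count_block2:
  assumes "\<And>k. fact j \<le> k \<Longrightarrow> k < fact (Suc j) \<Longrightarrow> P k"
  shows "real (card {i \<in> {1..fact (Suc j)::nat}. P i}) / real (fact (Suc j)) \<ge> 1 - 1 / (real j + 1)"
proof -
  let ?n = "fact (Suc j) :: nat"
  have c1: "real (card {i \<in> {1..?n}. \<not> P i}) / real ?n \<le> 1 / (real j + 1)"
    using count_block[of j "\<lambda>k. \<not> P k"] assms by blast
  have "card {i \<in> {1..?n}. P i} + card {i \<in> {1..?n}. \<not> P i} = card {1..?n}"
  proof -
    have "{i \<in> {1..?n}. P i} \<union> {i \<in> {1..?n}. \<not> P i} = {1..?n}" by auto
    moreover have "card ({i \<in> {1..?n}. P i} \<union> {i \<in> {1..?n}. \<not> P i}) = card {i \<in> {1..?n}. P i} + card {i \<in> {1..?n}. \<not> P i}"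
      by (rule card_Un_disjoint) auto
    ultimately show ?thesis by simp
  qed
  then have "real (card {i \<in> {1..?n}. P i}) + real (card {i \<in> {1..?n}. \<not> P i}) = real ?n"
    by (metis of_nat_add card_atLeastAtMost diff_Suc_1)
  then have "real (card {i \<in> {1..?n}. P i}) = real ?n - real (card {i \<in> {1..?n}. \<not> P i})"
    by linarith
  moreover have "real ?n > 0" by (metis fact_gt_zero of_nat_0_less_iff)
  ultimately show ?thesis using c1 by (simp add: diff_divide_distrib)
qed

lemma uncountable_funbool: "uncountable (UNIV :: (nat \<Rightarrow> bool) set)"
proof
  assume "countable (UNIV :: (nat \<Rightarrow> bool) set)"
  then have r: "range (from_nat_into (UNIV :: (nat \<Rightarrow> bool) set)) = UNIV" by simp
  define s where "s n = (\<not> from_nat_into (UNIV :: (nat \<Rightarrow> bool) set) n n)" for n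
  obtain m where "from_nat_into (UNIV :: (nat \<Rightarrow> bool) set) m = s"
    using r by (metis UNIV_I imageE)
  then show False using s_def by metis
qed


theorem mainTheorem5:
  fixes X :: "'a::metric_space set" and f :: "nat \<Rightarrow> 'a \<Rightarrow> 'a" and p :: "nat \<Rightarrow> nat"
    and A B :: "nat \<Rightarrow> 'a set" and a b :: 'a
  assumes "compact X"
    and "\<And>n. n \<ge> 1 \<Longrightarrow> continuous_on X (f n) \<and> f n ` X \<subseteq> X"
    and "\<And>k. k \<ge> 1 \<Longrightarrow> p k > 0"
    and "\<And>i. compact (A i) \<and> A i \<subseteq> X" and "\<And>i. A (Suc i) \<subseteq> A i"
    and "\<And>i. compact (B i) \<and> B i \<subseteq> X" and "\<And>i. B (Suc i) \<subseteq> B i"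
    and "(\<Inter>i. A i) = {a}" and "(\<Inter>i. B i) = {b}" and "a \<noteq> b"
    and "\<And>c :: nat \<Rightarrow> bool. \<exists>x\<in>X. \<forall>k\<ge>1. comp_seq f (p k) x \<in> (if c k then A k else B k)"
  shows "unif_distr_chaotic X f p"
proof -
  have "\<forall>c :: nat \<Rightarrow> bool. \<exists>x. x \<in> X \<and> (\<forall>k\<ge>1. comp_seq f (p k) x \<in> (if c k then A k else B k))"
    using assms(11) by blast
  then obtain xs where xs: "\<And>c. xs c \<in> X \<and> (\<forall>k\<ge>1. comp_seq f (p k) (xs c) \<in> (if c k then A k else B k))"
    by metis
  define C where "C s k = (\<exists>j. odd j \<and> fact j \<le> k \<and> k < fact (Suc j) \<and> s (fst (prod_decode (j div 2))))"
    for s :: "nat \<Rightarrow> bool" and k :: nat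
  have uniq: "j = j'" if "fact j \<le> k" "k < fact (Suc j)" "fact j' \<le> k" "k < fact (Suc j')" for j j' k :: nat
  proof (rule ccontr)
    assume "j \<noteq> j'"
    then consider "Suc j \<le> j'" | "Suc j' \<le> j" by linarith
    then show False
    proof cases
      case 1
      then have "(fact (Suc j) :: nat) \<le> fact j'" by (rule fact_mono)
      then show False using that by linarith
    next
      case 2
      then have "(fact (Suc j') :: nat) \<le> fact j" by (rule fact_mono)
      then show False using that by linarith
    qed
  qed
  have blk: "C s k = (odd j \<and> s (fst (prod_decode (j div 2))))"
    if "fact j \<le> k" "k < fact (Suc j)" for s j k
    unfolding C_def using uniq[OF that] that by blast
  define \<delta> where "\<delta> = dist a b"
  have dpos: "\<delta> > 0" using assms(10) \<delta>_def by simp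
  define \<epsilon> where "\<epsilon> = \<delta> / 3"
  have epos: "\<epsilon> > 0" using dpos \<epsilon>_def by simp
  obtain N1 where N1: "\<And>k. k \<ge> N1 \<Longrightarrow> A k \<subseteq> ball a \<epsilon>"
    using shrink[of A a \<epsilon>] assms(4,5,8) epos by blast
  obtain N2 where N2: "\<And>k. k \<ge> N2 \<Longrightarrow> B k \<subseteq> ball b \<epsilon>"
    using shrink[of B b \<epsilon>] assms(6,7,9) epos by blast
  define z where "z s = xs (C s)" for s
  define g where "g s k = comp_seq f (p k) (z s)" for s k
  have mem: "g s k \<in> (if C s k then A k else B k)" if "k \<ge> 1" for s k
    using xs[of "C s"] that unfolding g_def z_def by blast
  have far: "\<not> dist (g s k) (g s' k) < \<epsilon>"
    if sm: "s m \<noteq> s' m" and jj: "j = 2 * prod_encode (m, R) + 1" and R: "R \<ge> N1 + N2 + 1"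
      and k: "fact j \<le> k" "k < fact (Suc j)" for s m s' j R k
  proof -
    have "j \<le> fact j" by (rule fact_ge_self)
    moreover have "R \<le> prod_encode (m, R)" by (rule le_prod_encode_2)
    ultimately have kb: "k \<ge> N1" "k \<ge> N2" "k \<ge> 1" using jj R k by linarith+
    have jd: "odd j" "fst (prod_decode (j div 2)) = m" using jj by auto
    have Cs: "C s k = s m" "C s' k = s' m" using blk[OF k] jd by auto
    have tri: "dist a b \<le> dist a u + dist u v + dist v b" for u v
      using dist_triangle[of a b u] dist_triangle[of u b v] by linarith
    show ?thesis
    proof (cases "s m")
      case True
      then have "g s k \<in> A k" "g s' k \<in> B k" using mem[OF kb(3), of s] mem[OF kb(3), of s'] Cs sm by auto
      then have "dist a (g s k) < \<epsilon>" "dist b (g s' k) < \<epsilon>" using N1[OF kb(1)] N2[OF kb(2)] by auto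
      then show ?thesis using tri[of "g s k" "g s' k"] \<delta>_def \<epsilon>_def by (simp add: dist_commute)
    next
      case False
      then have "g s k \<in> B k" "g s' k \<in> A k" using mem[OF kb(3), of s] mem[OF kb(3), of s'] Cs sm by auto
      then have "dist b (g s k) < \<epsilon>" "dist a (g s' k) < \<epsilon>" using N1[OF kb(1)] N2[OF kb(2)] by auto
      then show ?thesis using tri[of "g s' k" "g s k"] \<delta>_def \<epsilon>_def by (simp add: dist_commute)
    qed
  qed
  have near: "dist (g s k) (g s' k) < t"
    if N3h: "\<And>k. k \<ge> N3 \<Longrightarrow> B k \<subseteq> ball b (t/2)" and j: "even j" "j \<ge> N3 + 1"
      and k: "fact j \<le> k" "k < fact (Suc j)" for N3 t j s s' k
  proof -
    have "j \<le> fact j" by (rule fact_ge_self)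
    then have kb: "k \<ge> N3" "k \<ge> 1" using j k by linarith+
    have "\<not> C s k" "\<not> C s' k" using blk[OF k] j by auto
    then have "g s k \<in> B k" "g s' k \<in> B k" using mem[OF kb(2), of s] mem[OF kb(2), of s'] by auto
    then have "dist b (g s k) < t/2" "dist b (g s' k) < t/2" using N3h[OF kb(1)] by auto
    then show ?thesis using dist_triangle[of "g s k" "g s' k" b] by (simp add: dist_commute)
  qed
  have freq_g: "freq f (z s) (z s') t p n = real (card {i \<in> {1..n}. dist (g s i) (g s' i) < t}) / real n"
    for s s' t n unfolding freq_def g_def by simp
  have arch: "\<exists>K::nat. 1 / e < real K" for e :: real by (rule reals_Archimedean2)
  have inv_lt: "1 / (real j + 1) < e" if "e > 0" "1 / e < real K" "K \<le> j" for e :: real and K j :: nat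
  proof -
    have "1 / e < real j + 1" using that by linarith
    then have "1 < e * (real j + 1)" using that(1) by (simp add: field_simps)
    then show ?thesis by (simp add: field_simps)
  qed
  have inj: "z s \<noteq> z s'" if ss: "s \<noteq> s'" for s s'
  proof
    assume eq: "z s = z s'"
    obtain m where sm: "s m \<noteq> s' m" using ss by blast
    define j where "j = 2 * prod_encode (m, N1 + N2 + 1) + 1"
    have "fact j < (fact (Suc j) :: nat)" using j_def by (simp add: fact_less_mono)
    then have "\<not> dist (g s (fact j)) (g s' (fact j)) < \<epsilon>"
      using far[where s=s and m=m and s'=s' and j=j and R="N1 + N2 + 1" and k="fact j", OF sm j_def] by simp
    moreover have "g s (fact j) = g s' (fact j)" using eq unfolding g_def by simp
    ultimately show False using epos by simp
  qed
  define S where "S = range z"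
  have SX: "S \<subseteq> X" using xs unfolding S_def z_def by blast
  have unc: "uncountable S"
  proof
    assume "countable S"
    then have "countable (UNIV :: (nat \<Rightarrow> bool) set)"
      using countable_image_inj_on[of z UNIV] inj unfolding S_def inj_on_def by blast
    then show False using uncountable_funbool by blast
  qed
  have main: "Phi_lower f x y \<epsilon> p = 0 \<and> (\<forall>t>0. Phi_upper f x y t p = 1)"
    if xyS: "x \<in> S" "y \<in> S" "x \<noteq> y" for x y
  proof -
    obtain s s' where xy: "x = z s" "y = z s'" using xyS unfolding S_def by blast
    then have "s \<noteq> s'" using xyS by blast
    then obtain m where sm: "s m \<noteq> s' m" by blast
    have "Phi_lower f x y \<epsilon> p = 0"
      unfolding Phi_lower_def xy
    proof (rule liminf_zero)
      show "0 \<le> freq f (z s) (z s') \<epsilon> p n" for n unfolding freq_def by simp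
      fix N :: nat and e :: real assume e: "e > 0"
      obtain K :: nat where K: "1 / e < real K" using arch by blast
      define R where "R = N + N1 + N2 + K + 1"
      define j where "j = 2 * prod_encode (m, R) + 1"
      have RN: "R \<ge> N1 + N2 + 1" unfolding R_def by simp
      have "R \<le> prod_encode (m, R)" by (rule le_prod_encode_2)
      then have jR: "j \<ge> R" using j_def by linarith
      have "Suc j \<le> fact (Suc j)" by (rule fact_ge_self)
      then have nN: "fact (Suc j) \<ge> N" using jR R_def by linarith
      have "freq f (z s) (z s') \<epsilon> p (fact (Suc j)) \<le> 1 / (real j + 1)"
        unfolding freq_g
        by (rule count_block, rule far[where s=s and m=m and s'=s' and j=j and R=R, OF sm j_def RN])
      also have "\<dots> < e" using inv_lt[OF e K] jR R_def by simp
      finally show "\<exists>n\<ge>N. freq f (z s) (z s') \<epsilon> p n < e" using nN by blast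
    qed
    moreover have "Phi_upper f x y t p = 1" if t: "t > 0" for t
    proof -
      obtain N3 where N3: "\<And>k. k \<ge> N3 \<Longrightarrow> B k \<subseteq> ball b (t/2)"
        using shrink[of B b "t/2"] assms(6,7,9) t by auto
      show ?thesis
        unfolding Phi_upper_def xy
      proof (rule limsup_one)
        show "freq f (z s) (z s') t p n \<le> 1" for n
        proof (cases "n = 0")
          case True then show ?thesis unfolding freq_def by simp
        next
          case False
          have "card {i \<in> {1..n}. dist (g s i) (g s' i) < t} \<le> card {1..n}"
            by (rule card_mono) auto
          then show ?thesis unfolding freq_g using False by simp
        qed
        fix N :: nat and e :: real assume e: "e > 0"
        obtain K :: nat where K: "1 / e < real K" using arch by blast
        define j where "j = 2 * (N + N3 + K + 1)"
        have ev: "even j" "j \<ge> N3 + 1" using j_def by auto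
        have "Suc j \<le> fact (Suc j)" by (rule fact_ge_self)
        moreover have "N \<le> Suc j" using j_def by simp
        ultimately have nN: "fact (Suc j) \<ge> N" by (rule order.trans[rotated])
        have "1 - e < 1 - 1 / (real j + 1)" using inv_lt[OF e K, of j] j_def by simp
        also have "\<dots> \<le> freq f (z s) (z s') t p (fact (Suc j))"
          unfolding freq_g
          by (rule count_block2, rule near[where t=t and j=j and s=s and s'=s', OF N3 ev])
        finally show "\<exists>n\<ge>N. freq f (z s) (z s') t p n > 1 - e" using nN by blast
      qed
    qed
    ultimately show ?thesis by blast
  qed
  show ?thesis
    unfolding unif_distr_chaotic_def
    by (rule exI[where x=S], intro conjI SX unc exI[where x="\<epsilon>"] epos ballI impI main)
qed

end
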